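(* Let $G_0$ be one of $\mathrm{SL}(2,\mathbb R)$, $\mathrm{SL}(2,\mathbb C)$, or $\mathrm{SO}_e(n,1)$ with $n\ge2$, with Lie algebra $\mathfrak g_0$. Let $\mathfrak g=\mathfrak g_0\times\mathfrak g_0\times\mathfrak g_0$ and $\mathfrak h=\{(X,X,X):X\in\mathfrak g_0\}$. Let $\mathfrak p=\mathfrak p_1\times\mathfrak p_2\times\mathfrak p_3$ be a minimal parabolic subalgebra of $\mathfrak g$, where each $\mathfrak p_j$ is a minimal parabolic subalgebra of $\mathfrak g_0$. Then $\mathfrak g=\mathfrak p+\mathfrak h$ if and only if $\mathfrak p_1,\mathfrak p_2,\mathfrak p_3$ are pairwise distinct. In particular, there exists a minimal parabolic subalgebra $\mathfrak p$ of $\mathfrak g$ with $\mathfrak g=\mathfrak p+\mathfrak h$. *)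

theory Defs
  imports "HOL-Analysis.Analysis"
begin

definition mbracket :: "'k::comm_ring_1^'i^'i \<Rightarrow> 'k^'i^'i \<Rightarrow> 'k^'i^'i" where
  "mbracket X Y = X ** Y - Y ** X"

text \<open>Given a real-rank-one matrix Lie algebra g0 and a generator H of a maximal
  split abelian subspace a (normalised so that the positive restricted root takes
  value c on H), the standard minimal parabolic subalgebra m + a + n is the sum of
  the centraliser of H in g0 (which is m + a) and the positive restricted root
  space n = {Z in g0. [H,Z] = c Z}.\<close>
definition std_min_parabolic :: "('k::comm_ring_1^'i^'i) set \<Rightarrow> 'k^'i^'i \<Rightarrow> 'k \<Rightarrow> ('k^'i^'i) set" where
  "std_min_parabolic g0 H c =
     {Y + Z | Y Z. Y \<in> g0 \<and> Z \<in> g0 \<and> mbracket H Y = 0 \<and> mbracket H Z = mat c ** Z}"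

definition min_parabolic ::
  "('k::comm_ring_1^'i^'i) set \<Rightarrow> ('k^'i^'i) set \<Rightarrow> 'k^'i^'i \<Rightarrow> 'k \<Rightarrow> ('k^'i^'i) set \<Rightarrow> bool" where
  "min_parabolic G0 g0 H c p \<longleftrightarrow>
     (\<exists>g\<in>G0. p = (\<lambda>X. g ** X ** matrix_inv g) ` std_min_parabolic g0 H c)"

text \<open>g = p + h for g = g0 x g0 x g0, p = p1 x p2 x p3 and h the diagonal copy of g0.\<close>
definition sum_with_diagonal_is_all ::
  "'a::ab_group_add set \<Rightarrow> 'a set \<Rightarrow> 'a set \<Rightarrow> 'a set \<Rightarrow> bool" where
  "sum_with_diagonal_is_all g0 p1 p2 p3 \<longleftrightarrow>
     {(x1 + y, x2 + y, x3 + y) | x1 x2 x3 y. x1 \<in> p1 \<and> x2 \<in> p2 \<and> x3 \<in> p3 \<and> y \<in> g0}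
       = g0 \<times> g0 \<times> g0"

definition SL2R :: "(real^2^2) set" where "SL2R = {g. det g = 1}"
definition sl2R :: "(real^2^2) set" where "sl2R = {X. trace X = 0}"
definition H_sl2R :: "real^2^2" where
  "H_sl2R = (\<chi> i j. if i = j then (if i = 1 then 1 else -1) else 0)"

definition SL2C :: "(complex^2^2) set" where "SL2C = {g. det g = 1}"
definition sl2C :: "(complex^2^2) set" where "sl2C = {X. trace X = 0}"
definition H_sl2C :: "complex^2^2" where
  "H_sl2C = (\<chi> i j. if i = j then (if i = 1 then 1 else -1) else 0)"

section \<open>SO_e(n,1), acting on R^(n+1) indexed by 'n + 1; the time coordinate is Inr 1\<close>

definition J_Lor :: "real^('n::finite + 1)^('n + 1)" where
  "J_Lor = (\<chi> i j. if i = j then (if i = Inr 1 then -1 else 1) else 0)"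

text \<open>Identity component of SO(n,1): determinant 1 and time-orientation preserving.\<close>
definition SOe :: "(real^('n::finite + 1)^('n + 1)) set" where
  "SOe = {g. transpose g ** J_Lor ** g = J_Lor \<and> det g = 1 \<and> g $ Inr 1 $ Inr 1 > 0}"

definition so_n1 :: "(real^('n::finite + 1)^('n + 1)) set" where
  "so_n1 = {X. transpose X ** J_Lor + J_Lor ** X = 0}"

text \<open>A boost generator in the plane of a (fixed, arbitrary) spatial axis and time.\<close>
definition H_so :: "real^('n::finite + 1)^('n + 1)" where
  "H_so = (\<chi> i j. if (i = Inl (SOME a. True) \<and> j = Inr 1) \<or> (i = Inr 1 \<and> j = Inl (SOME a. True))
                  then 1 else 0)"

end

theory Submission
  imports Defs
begin


lemma not_all_if_eq:
  fixes p :: "'a::ab_group_add set"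
  assumes sub: "\<And>x y. x \<in> p \<Longrightarrow> y \<in> p \<Longrightarrow> x - y \<in> p"
    and a: "a \<in> g0" and b: "b \<in> g0" and ab: "a - b \<notin> p"
    and eq: "(p1 = p \<and> p2 = p) \<or> (p1 = p \<and> p3 = p) \<or> (p2 = p \<and> p3 = p)"
  shows "\<not> sum_with_diagonal_is_all g0 p1 p2 p3"
proof
  assume S: "sum_with_diagonal_is_all g0 p1 p2 p3"
  have mem: "\<And>u v w. u \<in> g0 \<Longrightarrow> v \<in> g0 \<Longrightarrow> w \<in> g0 \<Longrightarrow>
     \<exists>x1 x2 x3 y. x1 \<in> p1 \<and> x2 \<in> p2 \<and> x3 \<in> p3 \<and> u = x1 + y \<and> v = x2 + y \<and> w = x3 + y"
  proof -
    fix u v w assume "u \<in> g0" "v \<in> g0" "w \<in> g0"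
    then have "(u,v,w) \<in> g0 \<times> g0 \<times> g0" by auto
    then show "\<exists>x1 x2 x3 y. x1 \<in> p1 \<and> x2 \<in> p2 \<and> x3 \<in> p3 \<and> u = x1 + y \<and> v = x2 + y \<and> w = x3 + y"
      using S unfolding sum_with_diagonal_is_all_def by (smt (verit) mem_Collect_eq prod.inject)
  qed
  from eq show False
  proof (elim disjE conjE)
    assume "p1 = p" "p2 = p"
    from mem[OF a b a] obtain x1 x2 x3 y where "x1 \<in> p1" "x2 \<in> p2" "a = x1 + y" "b = x2 + y" by blast
    then have "a - b = x1 - x2" by simp
    with sub \<open>x1 \<in> p1\<close> \<open>x2 \<in> p2\<close> \<open>p1 = p\<close> \<open>p2 = p\<close> ab show False by auto
  next
    assume "p1 = p" "p3 = p"
    from mem[OF a a b] obtain x1 x2 x3 y where "x1 \<in> p1" "x3 \<in> p3" "a = x1 + y" "b = x3 + y" by blast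
    then have "a - b = x1 - x3" by simp
    with sub \<open>x1 \<in> p1\<close> \<open>x3 \<in> p3\<close> \<open>p1 = p\<close> \<open>p3 = p\<close> ab show False by auto
  next
    assume "p2 = p" "p3 = p"
    from mem[OF a a b] obtain x1 x2 x3 y where "x2 \<in> p2" "x3 \<in> p3" "a = x2 + y" "b = x3 + y" by blast
    then have "a - b = x2 - x3" by simp
    with sub \<open>x2 \<in> p2\<close> \<open>x3 \<in> p3\<close> \<open>p2 = p\<close> \<open>p3 = p\<close> ab show False by auto
  qed
qed

lemma all_if_solvable:
  fixes g0 :: "'a::ab_group_add set"
  assumes sub: "p1 \<subseteq> g0" "p2 \<subseteq> g0" "p3 \<subseteq> g0"
    and add: "\<And>x y. x \<in> g0 \<Longrightarrow> y \<in> g0 \<Longrightarrow> x + y \<in> g0"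
    and diff: "\<And>x y. x \<in> g0 \<Longrightarrow> y \<in> g0 \<Longrightarrow> x - y \<in> g0"
    and solve: "\<And>a b c. a \<in> g0 \<Longrightarrow> b \<in> g0 \<Longrightarrow> c \<in> g0 \<Longrightarrow>
        \<exists>y\<in>g0. a - y \<in> p1 \<and> b - y \<in> p2 \<and> c - y \<in> p3"
  shows "sum_with_diagonal_is_all g0 p1 p2 p3"
  unfolding sum_with_diagonal_is_all_def
proof (intro equalityI subsetI)
  fix t assume "t \<in> {(x1 + y, x2 + y, x3 + y) |x1 x2 x3 y. x1 \<in> p1 \<and> x2 \<in> p2 \<and> x3 \<in> p3 \<and> y \<in> g0}"
  then show "t \<in> g0 \<times> g0 \<times> g0" using sub add by blast
next
  fix t assume "t \<in> g0 \<times> g0 \<times> g0"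
  then obtain a b c where t: "t = (a,b,c)" "a \<in> g0" "b \<in> g0" "c \<in> g0" by auto
  from solve[OF t(2-4)] obtain y where y: "y \<in> g0" "a - y \<in> p1" "b - y \<in> p2" "c - y \<in> p3" by blast
  have "t = ((a - y) + y, (b - y) + y, (c - y) + y)" using t by simp
  with y show "t \<in> {(x1 + y, x2 + y, x3 + y) |x1 x2 x3 y. x1 \<in> p1 \<and> x2 \<in> p2 \<and> x3 \<in> p3 \<and> y \<in> g0}"
    by blast
qed



section \<open>SL(2) over a field of characteristic 0\<close>

definition crs :: "'k::comm_ring_1^2 \<Rightarrow> 'k^2 \<Rightarrow> 'k" where
  "crs x y = x$1 * y$2 - x$2 * y$1"

definition fv :: "'k::comm_ring_1^2 \<Rightarrow> 'k^2^2 \<Rightarrow> 'k" where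
  "fv v X = crs (X *v v) v"

definition pv :: "'k::comm_ring_1^2 \<Rightarrow> ('k^2^2) set" where
  "pv v = {X. trace X = 0 \<and> fv v X = 0}"

definition Hd :: "'k::comm_ring_1^2^2" where
  "Hd = (\<chi> i j. if i = j then (if i = 1 then 1 else -1) else 0)"

lemma mv2: "(X *v v)$1 = X$1$1 * v$1 + X$1$2 * v$2" "(X *v v)$2 = X$2$1 * v$1 + X$2$2 * v$2"
  for X :: "'k::comm_ring_1^2^2"
  by (simp_all add: matrix_vector_mult_def sum_2)

lemma mm2: "(A ** B)$i$j = A$i$1 * B$1$j + A$i$2 * B$2$j" for A B :: "'k::comm_ring_1^2^2"
  by (simp add: matrix_matrix_mult_def sum_2)

lemma tr2: "trace X = X$1$1 + X$2$2" for X :: "'k::comm_ring_1^2^2"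
  by (simp add: trace_def sum_2)

lemma eq2: "A = B \<longleftrightarrow> A$1$1 = B$1$1 \<and> A$1$2 = B$1$2 \<and> A$2$1 = B$2$1 \<and> A$2$2 = B$2$2"
  for A B :: "'k^2^2"
  by (auto simp: vec_eq_iff forall_2)

lemma fv_expand: "fv v X = (X$1$1 * v$1 + X$1$2 * v$2) * v$2 - (X$2$1 * v$1 + X$2$2 * v$2) * v$1"
  by (simp add: fv_def crs_def mv2)

lemma mat_mul2: "(mat c ** Z)$i$j = c * Z$i$j" for Z :: "'k::comm_ring_1^2^2"
  by (simp add: mm2 mat_def) (metis exhaust_2)

lemma Hd_ent [simp]: "Hd$1$1 = 1" "Hd$1$2 = 0" "Hd$2$1 = 0" "Hd$2$2 = -1"
  by (simp_all add: Hd_def)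

lemma std_sl2:
  "std_min_parabolic {X::'k::field_char_0^2^2. trace X = 0} Hd 2 = {X. trace X = 0 \<and> X$2$1 = 0}"
proof (intro equalityI subsetI)
  fix X assume "X \<in> std_min_parabolic {X::'k^2^2. trace X = 0} Hd 2"
  then obtain Y Z where X: "X = Y + Z" "trace Y = 0" "trace Z = 0" "mbracket Hd Y = 0"
     "mbracket Hd Z = mat 2 ** Z"
    unfolding std_min_parabolic_def by auto
  from X(4) have "(mbracket Hd Y)$2$1 = 0" by simp
  then have y: "Y$2$1 = 0" by (simp add: mbracket_def mm2)
  from X(5) have "(mbracket Hd Z)$2$1 = (mat 2 ** Z)$2$1" by simp
  then have z: "Z$2$1 = 0" by (simp add: mbracket_def mm2 mat_def)
  show "X \<in> {X. trace X = 0 \<and> X$2$1 = 0}" using X y z by (simp add: trace_add)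
next
  fix X :: "'k^2^2" assume "X \<in> {X. trace X = 0 \<and> X$2$1 = 0}"
  then have X: "X$1$1 + X$2$2 = 0" "X$2$1 = 0" by (auto simp: tr2)
  define Y :: "'k^2^2" where "Y = (\<chi> i j. if i = j then X$i$j else 0)"
  define Z :: "'k^2^2" where "Z = (\<chi> i j. if i = 1 \<and> j = 2 then X$i$j else 0)"
  have "X = Y + Z" using X by (simp add: eq2 Y_def Z_def)
  moreover have "trace Y = 0" "trace Z = 0" using X by (simp_all add: tr2 Y_def Z_def)
  moreover have "mbracket Hd Y = 0" by (simp add: eq2 mbracket_def mm2 Y_def)
  moreover have "mbracket Hd Z = mat 2 ** Z" by (simp add: eq2 mbracket_def mm2 mat_def Z_def)
  ultimately show "X \<in> std_min_parabolic {X::'k^2^2. trace X = 0} Hd 2"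
    unfolding std_min_parabolic_def by blast
qed

definition adj2 :: "'k::comm_ring_1^2^2 \<Rightarrow> 'k^2^2" where
  "adj2 g = (\<chi> i j. if i = 1 then (if j = 1 then g$2$2 else - g$1$2) else (if j = 1 then - g$2$1 else g$1$1))"

lemma adj2_ent [simp]: "adj2 g$1$1 = g$2$2" "adj2 g$1$2 = - g$1$2" "adj2 g$2$1 = - g$2$1" "adj2 g$2$2 = g$1$1"
  by (simp_all add: adj2_def)

lemma adj2_inv:
  fixes g :: "'k::field^2^2" assumes "det g = 1"
  shows "g ** adj2 g = mat 1" "adj2 g ** g = mat 1" "matrix_inv g = adj2 g"
proof -
  have d: "g$1$1 * g$2$2 - g$1$2 * g$2$1 = 1" using assms by (simp add: det_2)
  show 1: "g ** adj2 g = mat 1" using d by (simp add: eq2 mm2 mat_def algebra_simps)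
  show 2: "adj2 g ** g = mat 1" using d by (simp add: eq2 mm2 mat_def algebra_simps)
  have "g ** matrix_inv g = mat 1 \<and> matrix_inv g ** g = mat 1"
    unfolding matrix_inv_def by (rule someI[of _ "adj2 g"]) (use 1 2 in simp)
  then have "matrix_inv g = (adj2 g ** g) ** matrix_inv g" using 2 by simp
  also have "\<dots> = adj2 g ** (g ** matrix_inv g)" by (simp add: matrix_mul_assoc)
  finally show "matrix_inv g = adj2 g" using \<open>g ** matrix_inv g = mat 1 \<and> _\<close> by simp
qed

definition col1 :: "'k^2^2 \<Rightarrow> 'k^2" where "col1 g = (\<chi> i. g$i$1)"

lemma col1_ent [simp]: "col1 g $ i = g$i$1" by (simp add: col1_def)

lemma adj_conj_21: "(adj2 g ** X ** g)$2$1 = - fv (col1 g) X" for g X :: "'k::comm_ring_1^2^2"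
  by (simp add: mm2 fv_expand algebra_simps)

lemma conj_sl2:
  fixes g :: "'k::field_char_0^2^2" assumes "det g = 1"
  shows "(\<lambda>X. g ** X ** matrix_inv g) ` {X. trace X = 0 \<and> X$2$1 = 0} = pv (col1 g)"
proof (intro equalityI subsetI)
  note inv = adj2_inv[OF assms]
  fix X assume "X \<in> (\<lambda>X. g ** X ** matrix_inv g) ` {X. trace X = 0 \<and> X$2$1 = 0}"
  then obtain S where S: "trace S = 0" "S$2$1 = 0" "X = g ** S ** adj2 g" using inv by auto
  have "trace X = trace ((S ** adj2 g) ** g)" unfolding S(3)
    by (metis trace_mul_sym matrix_mul_assoc)
  also have "\<dots> = trace S" using inv by (simp add: matrix_mul_assoc[symmetric])
  finally have t: "trace X = 0" using S by simp
  have "adj2 g ** X ** g = (adj2 g ** g) ** S ** (adj2 g ** g)" unfolding S(3) by (simp add: matrix_mul_assoc)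
  then have "adj2 g ** X ** g = S" using inv by simp
  then have "fv (col1 g) X = 0" using adj_conj_21[of g X] S by simp
  with t show "X \<in> pv (col1 g)" by (simp add: pv_def)
next
  note inv = adj2_inv[OF assms]
  fix X assume "X \<in> pv (col1 g)"
  then have X: "trace X = 0" "fv (col1 g) X = 0" by (auto simp: pv_def)
  define S where "S = adj2 g ** X ** g"
  have "trace S = trace (g ** (adj2 g ** X))" unfolding S_def by (rule trace_mul_sym)
  also have "\<dots> = trace X" using inv by (simp add: matrix_mul_assoc)
  finally have "trace S = 0" using X by simp
  moreover have "S$2$1 = 0" using adj_conj_21[of g X] X unfolding S_def by simp
  moreover have "X = g ** S ** matrix_inv g" unfolding S_def inv(3)
    by (simp add: matrix_mul_assoc inv(1)) (simp add: matrix_mul_assoc[symmetric] inv(1))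
  ultimately show "X \<in> (\<lambda>X. g ** X ** matrix_inv g) ` {X. trace X = 0 \<and> X$2$1 = 0}" by blast
qed

lemma fv_diff: "fv v (X - Y) = fv v X - fv v Y" by (simp add: fv_expand algebra_simps)

definition lc3 :: "'k::comm_ring_1 \<Rightarrow> 'k^2^2 \<Rightarrow> 'k \<Rightarrow> 'k^2^2 \<Rightarrow> 'k \<Rightarrow> 'k^2^2 \<Rightarrow> 'k^2^2" where
  "lc3 a A b B c C = (\<chi> i j. a * A$i$j + b * B$i$j + c * C$i$j)"

lemma fv_lc3: "fv v (lc3 a A b B c C) = a * fv v A + b * fv v B + c * fv v C"
  by (simp add: fv_expand lc3_def algebra_simps)

lemma tr_lc3: "trace (lc3 a A b B c C) = a * trace A + b * trace B + c * trace C"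
  by (simp add: tr2 lc3_def algebra_simps)

definition Mpq :: "'k::comm_ring_1^2 \<Rightarrow> 'k^2 \<Rightarrow> 'k^2^2" where
  "Mpq p q = (\<chi> i j. p$i * (if j = 1 then q$2 else - q$1) + q$i * (if j = 1 then p$2 else - p$1))"

lemma Mpq_ent: "Mpq p q $1$1 = p$1 * q$2 + q$1 * p$2" "Mpq p q $1$2 = - p$1 * q$1 - q$1 * p$1"
  "Mpq p q $2$1 = p$2 * q$2 + q$2 * p$2" "Mpq p q $2$2 = - p$2 * q$1 - q$2 * p$1"
  by (simp_all add: Mpq_def)

lemma tr_Mpq: "trace (Mpq p q) = 0" by (simp add: tr2 Mpq_ent algebra_simps)

lemma fv_Mpq: "fv v (Mpq p q) = 2 * crs v q * crs p v"
  by (simp add: fv_expand Mpq_ent crs_def algebra_simps)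

lemma crs_self [simp]: "crs v v = 0" by (simp add: crs_def mult.commute)

lemma sl2_solve:
  fixes v1 v2 v3 :: "'k::field_char_0^2"
  assumes c12: "crs v1 v2 \<noteq> 0" and c13: "crs v1 v3 \<noteq> 0" and c23: "crs v2 v3 \<noteq> 0"
    and a: "trace a1 = 0" "trace a2 = 0" "trace a3 = 0"
  shows "\<exists>y. trace y = 0 \<and> a1 - y \<in> pv v1 \<and> a2 - y \<in> pv v2 \<and> a3 - y \<in> pv v3"
proof -
  have c21: "crs v2 v1 \<noteq> 0" "crs v3 v1 \<noteq> 0" "crs v3 v2 \<noteq> 0"
    using c12 c13 c23 by (auto simp: crs_def algebra_simps)
  define M1 where "M1 = Mpq v2 v3"
  define M2 where "M2 = Mpq v1 v3"
  define M3 where "M3 = Mpq v1 v2"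
  define l1 where "l1 = fv v1 a1 / fv v1 M1"
  define l2 where "l2 = fv v2 a2 / fv v2 M2"
  define l3 where "l3 = fv v3 a3 / fv v3 M3"
  define y where "y = lc3 l1 M1 l2 M2 l3 M3"
  have n1: "fv v1 M1 \<noteq> 0" "fv v2 M2 \<noteq> 0" "fv v3 M3 \<noteq> 0"
    using c12 c13 c23 c21 by (simp_all add: M1_def M2_def M3_def fv_Mpq)
  have z: "fv v1 M2 = 0" "fv v1 M3 = 0" "fv v2 M1 = 0" "fv v2 M3 = 0" "fv v3 M1 = 0" "fv v3 M2 = 0"
    by (simp_all add: M1_def M2_def M3_def fv_Mpq)
  have ty: "trace y = 0" by (simp add: y_def tr_lc3 M1_def M2_def M3_def tr_Mpq)
  have "fv v1 y = fv v1 a1" "fv v2 y = fv v2 a2" "fv v3 y = fv v3 a3"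
    using n1 z by (simp_all add: y_def fv_lc3 l1_def l2_def l3_def)
  then show ?thesis using ty a
    by (intro exI[of _ y]) (simp add: pv_def trace_sub fv_diff)
qed

lemma col1_nz: "det g = (1::'k::field) \<Longrightarrow> col1 g \<noteq> 0"
  by (auto simp: det_2 vec_eq_iff forall_2)

lemma vec2_eq: "x = y \<longleftrightarrow> x$1 = y$1 \<and> x$2 = y$2" for x y :: "'k^2"
  by (auto simp: vec_eq_iff forall_2)

lemma pv_par:
  fixes v w :: "'k::field^2"
  assumes "crs v w = 0" "v \<noteq> 0" "w \<noteq> 0"
  shows "pv v = pv w"
proof -
  have e: "v$1 * w$2 = v$2 * w$1" using assms(1) by (simp add: crs_def)
  obtain l where l: "w$1 = l * v$1" "w$2 = l * v$2"
  proof (cases "v$1 = 0")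
    case True
    then have "v$2 \<noteq> 0" using assms(2) by (simp add: vec2_eq)
    with True e have "w$1 = 0" by simp
    show ?thesis using that[of "w$2 / v$2"] True \<open>w$1 = 0\<close> \<open>v$2 \<noteq> 0\<close> by simp
  next
    case False
    have "w$2 = w$1 / v$1 * v$2" using e False by (simp add: field_simps)
    then show ?thesis using that[of "w$1 / v$1"] False by simp
  qed
  have "l \<noteq> 0" using l assms(3) by (auto simp: vec2_eq)
  have "fv w X = l^2 * fv v X" for X using l by (simp add: fv_expand power2_eq_square algebra_simps)
  then show ?thesis using \<open>l \<noteq> 0\<close> by (simp add: pv_def)
qed

lemma pv_proper:
  fixes v :: "'k::field^2"
  assumes "v \<noteq> 0"
  shows "\<exists>E. trace E = 0 \<and> E \<notin> pv v"
proof (cases "v$2 = 0")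
  case True
  then have "v$1 \<noteq> 0" using assms by (simp add: vec2_eq)
  let ?E = "(\<chi> i j. if i = 2 \<and> j = 1 then 1 else 0) :: 'k^2^2"
  have "trace ?E = 0" "fv v ?E = - (v$1 * v$1)" using True by (simp_all add: tr2 fv_expand)
  then show ?thesis using \<open>v$1 \<noteq> 0\<close> by (intro exI[of _ ?E]) (simp add: pv_def)
next
  case False
  let ?E = "(\<chi> i j. if i = 1 \<and> j = 2 then 1 else 0) :: 'k^2^2"
  have "trace ?E = 0" "fv v ?E = v$2 * v$2" by (simp_all add: tr2 fv_expand)
  then show ?thesis using False by (intro exI[of _ ?E]) (simp add: pv_def)
qed

lemma min_par_sl2:
  "min_parabolic {g::'k::field_char_0^2^2. det g = 1} {X. trace X = 0} Hd 2 p \<longleftrightarrow>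
     (\<exists>g. det g = 1 \<and> p = pv (col1 g))"
  unfolding min_parabolic_def std_sl2 using conj_sl2 by auto

lemma sl2_main:
  "(\<forall>p1 p2 p3. min_parabolic {g::'k::field_char_0^2^2. det g = 1} {X. trace X = 0} Hd 2 p1
       \<and> min_parabolic {g::'k^2^2. det g = 1} {X. trace X = 0} Hd 2 p2
       \<and> min_parabolic {g::'k^2^2. det g = 1} {X. trace X = 0} Hd 2 p3 \<longrightarrow>
      (sum_with_diagonal_is_all {X. trace X = 0} p1 p2 p3 \<longleftrightarrow> p1 \<noteq> p2 \<and> p1 \<noteq> p3 \<and> p2 \<noteq> p3))
   \<and> (\<exists>p1 p2 p3. min_parabolic {g::'k::field_char_0^2^2. det g = 1} {X. trace X = 0} Hd 2 p1
       \<and> min_parabolic {g::'k^2^2. det g = 1} {X. trace X = 0} Hd 2 p2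
       \<and> min_parabolic {g::'k^2^2. det g = 1} {X. trace X = 0} Hd 2 p3
       \<and> sum_with_diagonal_is_all {X. trace X = 0} p1 p2 p3)"
proof (intro conjI allI impI)
  have sl_add: "\<And>x y::'k^2^2. x \<in> {X. trace X = 0} \<Longrightarrow> y \<in> {X. trace X = 0} \<Longrightarrow> x + y \<in> {X. trace X = 0}"
    by (simp add: trace_add)
  have sl_diff: "\<And>x y::'k^2^2. x \<in> {X. trace X = 0} \<Longrightarrow> y \<in> {X. trace X = 0} \<Longrightarrow> x - y \<in> {X. trace X = 0}"
    by (simp add: trace_sub)
  have pv_sub: "pv v \<subseteq> {X. trace X = 0}" for v :: "'k^2" by (auto simp: pv_def)
  have solv: "sum_with_diagonal_is_all {X. trace X = 0} (pv v1) (pv v2) (pv v3)"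
    if "crs v1 v2 \<noteq> 0" "crs v1 v3 \<noteq> 0" "crs v2 v3 \<noteq> 0" for v1 v2 v3 :: "'k^2"
  proof (rule all_if_solvable[OF pv_sub pv_sub pv_sub sl_add sl_diff])
    fix a b c :: "'k^2^2" assume "a \<in> {X. trace X = 0}" "b \<in> {X. trace X = 0}" "c \<in> {X. trace X = 0}"
    then have "trace a = 0" "trace b = 0" "trace c = 0" by auto
    from sl2_solve[OF that this] show "\<exists>y\<in>{X. trace X = 0}. a - y \<in> pv v1 \<and> b - y \<in> pv v2 \<and> c - y \<in> pv v3"
      by auto
  qed
  {
    fix p1 p2 p3 :: "('k^2^2) set"
    assume "min_parabolic {g::'k::field_char_0^2^2. det g = 1} {X. trace X = 0} Hd 2 p1
       \<and> min_parabolic {g::'k^2^2. det g = 1} {X. trace X = 0} Hd 2 p2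
       \<and> min_parabolic {g::'k^2^2. det g = 1} {X. trace X = 0} Hd 2 p3"
    then obtain g1 g2 g3 :: "'k^2^2" where g: "det g1 = 1" "det g2 = 1" "det g3 = 1"
      "p1 = pv (col1 g1)" "p2 = pv (col1 g2)" "p3 = pv (col1 g3)"
      unfolding min_par_sl2 by blast
    have nz: "col1 g1 \<noteq> 0" "col1 g2 \<noteq> 0" "col1 g3 \<noteq> 0" using g col1_nz by auto
    show "sum_with_diagonal_is_all {X. trace X = 0} p1 p2 p3 \<longleftrightarrow> p1 \<noteq> p2 \<and> p1 \<noteq> p3 \<and> p2 \<noteq> p3"
    proof
      assume S: "sum_with_diagonal_is_all {X. trace X = 0} p1 p2 p3"
      show "p1 \<noteq> p2 \<and> p1 \<noteq> p3 \<and> p2 \<noteq> p3"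
      proof (rule ccontr)
        assume ne: "\<not> (p1 \<noteq> p2 \<and> p1 \<noteq> p3 \<and> p2 \<noteq> p3)"
        have "\<exists>p. (p1 = p \<and> p2 = p) \<or> (p1 = p \<and> p3 = p) \<or> (p2 = p \<and> p3 = p)"
          using ne by blast
        then obtain p where peq: "(p1 = p \<and> p2 = p) \<or> (p1 = p \<and> p3 = p) \<or> (p2 = p \<and> p3 = p)" by blast
        then obtain v where v: "v \<noteq> 0" "p = pv v" using g nz by blast
        obtain E where E: "trace E = 0" "E \<notin> pv v" using pv_proper[OF v(1)] by blast
        have "\<not> sum_with_diagonal_is_all {X. trace X = 0} p1 p2 p3"
        proof (rule not_all_if_eq[of p E "{X. trace X = 0}" 0])
          show "x - y \<in> p" if "x \<in> p" "y \<in> p" for x y using that v by (simp add: pv_def trace_sub fv_diff)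
        qed (use v E peq in \<open>auto simp: tr2\<close>)
        with S show False by simp
      qed
    next
      assume d: "p1 \<noteq> p2 \<and> p1 \<noteq> p3 \<and> p2 \<noteq> p3"
      have "crs (col1 g1) (col1 g2) \<noteq> 0" "crs (col1 g1) (col1 g3) \<noteq> 0" "crs (col1 g2) (col1 g3) \<noteq> 0"
        using d g nz pv_par by metis+
      then show "sum_with_diagonal_is_all {X. trace X = 0} p1 p2 p3" using solv g by simp
    qed
  }
  let ?g1 = "(\<chi> i j. if i = j then 1 else 0) :: 'k^2^2"
  let ?g2 = "(\<chi> i j. if i = 1 \<and> j = 2 then -1 else if i = 2 \<and> j = 1 then 1 else 0) :: 'k^2^2"
  let ?g3 = "(\<chi> i j. if i = 1 \<and> j = 2 then 0 else 1) :: 'k^2^2"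
  have dets: "det ?g1 = 1" "det ?g2 = 1" "det ?g3 = 1" by (simp_all add: det_2)
  have "crs (col1 ?g1) (col1 ?g2) \<noteq> 0" "crs (col1 ?g1) (col1 ?g3) \<noteq> 0" "crs (col1 ?g2) (col1 ?g3) \<noteq> 0"
    by (simp_all add: crs_def)
  from solv[OF this] dets show "\<exists>p1 p2 p3. min_parabolic {g::'k::field_char_0^2^2. det g = 1} {X. trace X = 0} Hd 2 p1
       \<and> min_parabolic {g::'k^2^2. det g = 1} {X. trace X = 0} Hd 2 p2
       \<and> min_parabolic {g::'k^2^2. det g = 1} {X. trace X = 0} Hd 2 p3
       \<and> sum_with_diagonal_is_all {X. trace X = 0} p1 p2 p3"
    unfolding min_par_sl2 by blast
qed



definition jv :: "'n::finite + 1 \<Rightarrow> real" where "jv i = (if i = Inr 1 then -1 else 1)"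

definition Bf :: "real^('n::finite+1) \<Rightarrow> real^('n+1) \<Rightarrow> real" where
  "Bf x y = (\<Sum>i\<in>UNIV. jv i * x$i * y$i)"

lemma sum_delta_r: "(\<Sum>k\<in>UNIV. f k * (if k = j then c k else 0)) = f j * c j"
  for f c :: "'b::finite \<Rightarrow> 'a::comm_ring_1"
  by (simp add: if_distrib[where f="\<lambda>x. f _ * x"] sum.delta' cong: if_cong)

lemma sum_delta_l: "(\<Sum>k\<in>UNIV. (if j = k then c k else 0) * f k) = c j * f j"
  for f c :: "'b::finite \<Rightarrow> 'a::comm_ring_1"
  by (simp add: if_distrib[where f="\<lambda>x. x * f _"] sum.delta cong: if_cong)

lemma J_ent: "J_Lor $ i $ j = (if i = j then jv i else 0)" by (simp add: J_Lor_def jv_def)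

lemma jv_sq [simp]: "jv i * jv i = 1" by (simp add: jv_def)
lemma jv_nz [simp]: "jv i \<noteq> 0" by (simp add: jv_def)

lemma so_iff: "X \<in> so_n1 \<longleftrightarrow> (\<forall>i j. X$j$i * jv j + jv i * X$i$j = 0)"
proof -
  have "(transpose X ** J_Lor + J_Lor ** X) $ i $ j = X$j$i * jv j + jv i * X$i$j" for i j
    by (simp add: matrix_matrix_mult_def transpose_def J_ent sum_delta_r sum_delta_l)
  then show ?thesis unfolding so_n1_def by (simp add: vec_eq_iff)
qed

lemma Bf_sym: "Bf x y = Bf y x" by (simp add: Bf_def algebra_simps)
lemma Bf_add_left: "Bf (x + z) y = Bf x y + Bf z y" by (simp add: Bf_def algebra_simps sum.distrib)
lemma Bf_add_right: "Bf y (x + z) = Bf y x + Bf y z" by (simp add: Bf_def algebra_simps sum.distrib)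
lemma Bf_diff_left: "Bf (x - z) y = Bf x y - Bf z y" by (simp add: Bf_def algebra_simps sum_subtractf)
lemma Bf_diff_right: "Bf y (x - z) = Bf y x - Bf y z" by (simp add: Bf_def algebra_simps sum_subtractf)
lemma Bf_scaleR_left: "Bf (c *\<^sub>R x) y = c * Bf x y" by (simp add: Bf_def algebra_simps sum_distrib_left)
lemma Bf_scaleR_right: "Bf y (c *\<^sub>R x) = c * Bf y x" by (simp add: Bf_def algebra_simps sum_distrib_left)
lemma Bf_minus_left: "Bf (- x) y = - Bf x y" by (simp add: Bf_def sum_negf)
lemma Bf_minus_right: "Bf y (- x) = - Bf y x" by (simp add: Bf_def sum_negf)
lemma Bf_zero [simp]: "Bf 0 y = 0" "Bf y 0 = 0" by (simp_all add: Bf_def)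

lemmas Bf_lin = Bf_add_left Bf_add_right Bf_diff_left Bf_diff_right Bf_scaleR_left Bf_scaleR_right
  Bf_minus_left Bf_minus_right

lemma J_mv: "J_Lor *v y = (\<chi> i. jv i * y$i)"
proof -
  have "(\<Sum>j\<in>UNIV. (if i = j then jv i else 0) * y$j) = jv i * y$i" for i
    by (rule sum_delta_l)
  then show ?thesis by (simp add: vec_eq_iff matrix_vector_mult_def J_ent)
qed

lemma Bf_inner: "Bf x y = inner x (J_Lor *v y)"
  by (simp add: Bf_def inner_vec_def J_mv algebra_simps)

lemma J_sq: "J_Lor ** J_Lor = (mat 1 :: real^('n::finite+1)^('n+1))"
  by (simp add: vec_eq_iff matrix_matrix_mult_def J_ent mat_def sum_delta_l)

lemma pres_Bf:
  fixes g :: "real^('n::finite+1)^('n+1)"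
  assumes "transpose g ** J_Lor ** g = J_Lor"
  shows "Bf (g *v x) (g *v y) = Bf x y"
proof -
  have "Bf (g *v x) (g *v y) = inner (x v* transpose g) (J_Lor *v (g *v y))"
    by (metis Bf_inner transpose_matrix_vector transpose_transpose)
  also have "\<dots> = inner x ((transpose g ** J_Lor ** g) *v y)"
    by (metis dot_lmul_matrix matrix_vector_mul_assoc)
  finally show ?thesis using assms by (simp add: Bf_inner)
qed

lemma so_Bf: "X \<in> so_n1 \<longleftrightarrow> (\<forall>x y. Bf (X *v x) y + Bf x (X *v y) = 0)"
proof -
  have e: "Bf (X *v x) y + Bf x (X *v y) = inner x ((transpose X ** J_Lor + J_Lor ** X) *v y)" for x y
  proof -
    have "Bf (X *v x) y = inner x ((transpose X ** J_Lor) *v y)"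
      by (metis Bf_inner dot_lmul_matrix matrix_vector_mul_assoc transpose_matrix_vector transpose_transpose)
    moreover have "Bf x (X *v y) = inner x ((J_Lor ** X) *v y)"
      by (simp add: Bf_inner matrix_vector_mul_assoc)
    ultimately show ?thesis by (simp add: matrix_vector_mult_add_rdistrib inner_add_right)
  qed
  show ?thesis
  proof
    assume "X \<in> so_n1" then show "\<forall>x y. Bf (X *v x) y + Bf x (X *v y) = 0"
      by (simp add: e so_n1_def)
  next
    assume A: "\<forall>x y. Bf (X *v x) y + Bf x (X *v y) = 0"
    let ?M = "transpose X ** J_Lor + J_Lor ** X"
    have "?M $ i $ j = 0" for i j
    proof -
      have "inner (axis i 1) (?M *v axis j 1) = 0" using A e by simp
      then show ?thesis
        by (simp add: matrix_vector_mult_basis inner_axis' column_def)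
    qed
    then show "X \<in> so_n1" by (simp add: so_n1_def vec_eq_iff)
  qed
qed

lemma so_Bf_self: "X \<in> so_n1 \<Longrightarrow> Bf (X *v x) x = 0"
  using so_Bf[of X] by (metis Bf_sym add.inverse_unique add_eq_0_iff2 neg_equal_zero)

lemma so_add: assumes "X \<in> so_n1" "Y \<in> so_n1" shows "X + Y \<in> so_n1"
proof -
  have "(X+Y)$j$i * jv j + jv i * (X+Y)$i$j = (X$j$i * jv j + jv i * X$i$j) + (Y$j$i * jv j + jv i * Y$i$j)"
    for i j by (simp add: algebra_simps)
  then show ?thesis using assms unfolding so_iff by simp
qed
lemma so_diff: assumes "X \<in> so_n1" "Y \<in> so_n1" shows "X - Y \<in> so_n1"
proof -
  have "(X-Y)$j$i * jv j + jv i * (X-Y)$i$j = (X$j$i * jv j + jv i * X$i$j) - (Y$j$i * jv j + jv i * Y$i$j)"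
    for i j by (simp add: algebra_simps)
  then show ?thesis using assms unfolding so_iff by simp
qed
lemma so_scaleR: assumes "X \<in> so_n1" shows "c *\<^sub>R X \<in> so_n1"
proof -
  have "(c *\<^sub>R X)$j$i * jv j + jv i * (c *\<^sub>R X)$i$j = c * (X$j$i * jv j + jv i * X$i$j)"
    for i j by (simp add: algebra_simps)
  then show ?thesis using assms unfolding so_iff by simp
qed

definition Wm :: "real^('n::finite+1) \<Rightarrow> real^('n+1) \<Rightarrow> real^('n+1)^('n+1)" where
  "Wm p q = (\<chi> i j. p$i * (jv j * q$j) - q$i * (jv j * p$j))"

lemma Wm_mv: "Wm p q *v x = Bf q x *\<^sub>R p - Bf p x *\<^sub>R q"
  by (simp add: vec_eq_iff Wm_def matrix_vector_mult_def Bf_def sum_subtractf sum_distrib_left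
      algebra_simps)

lemma Wm_so: "Wm p q \<in> so_n1"
  by (simp add: so_iff Wm_def algebra_simps)

definition stabs :: "real^('n::finite+1) \<Rightarrow> (real^('n+1)^('n+1)) set" where
  "stabs v = {X. X \<in> so_n1 \<and> (\<exists>l. X *v v = l *\<^sub>R v)}"

lemma SOe_J: "g \<in> SOe \<Longrightarrow> transpose g ** J_Lor ** g = J_Lor" by (simp add: SOe_def)

lemma inv_from_left:
  fixes g k :: "'a::field^'m^'m"
  assumes "k ** g = mat 1"
  shows "matrix_inv g ** g = mat 1" "g ** matrix_inv g = mat 1" "matrix_inv g = k"
proof -
  have gk: "g ** k = mat 1" using assms matrix_left_right_inverse by blast
  have *: "g ** matrix_inv g = mat 1 \<and> matrix_inv g ** g = mat 1"
    unfolding matrix_inv_def by (rule someI[of _ k]) (use gk assms in simp)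
  then show "matrix_inv g ** g = mat 1" "g ** matrix_inv g = mat 1" by auto
  have "matrix_inv g = (k ** g) ** matrix_inv g" using assms by simp
  also have "\<dots> = k ** (g ** matrix_inv g)" by (simp add: matrix_mul_assoc)
  finally show "matrix_inv g = k" using * by simp
qed

lemma SOe_inv:
  assumes "g \<in> SOe"
  shows "matrix_inv g ** g = mat 1" "g ** matrix_inv g = mat 1"
proof -
  have "(J_Lor ** transpose g ** J_Lor) ** g = J_Lor ** (transpose g ** J_Lor ** g)"
    by (simp add: matrix_mul_assoc)
  also have "\<dots> = mat 1" using SOe_J[OF assms] J_sq by simp
  finally have "(J_Lor ** transpose g ** J_Lor) ** g = mat 1" .
  from inv_from_left[OF this] show "matrix_inv g ** g = mat 1" "g ** matrix_inv g = mat 1" by auto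
qed

lemma SOe_pres: "g \<in> SOe \<Longrightarrow> Bf (g *v x) (g *v y) = Bf x y"
  using pres_Bf SOe_J by blast

lemma SOe_inv_pres:
  assumes "g \<in> SOe" shows "Bf (matrix_inv g *v x) (matrix_inv g *v y) = Bf x y"
proof -
  have "Bf (matrix_inv g *v x) (matrix_inv g *v y) = Bf (g *v (matrix_inv g *v x)) (g *v (matrix_inv g *v y))"
    using SOe_pres[OF assms] by simp
  also have "\<dots> = Bf x y" using SOe_inv[OF assms] by (simp add: matrix_vector_mul_assoc)
  finally show ?thesis .
qed

lemma conj_so:
  assumes pres: "\<And>x y. Bf (h *v x) (h *v y) = Bf x y" and hk: "h ** k = mat 1" and X: "X \<in> so_n1"
  shows "k ** X ** h \<in> so_n1"
proof -
  have hv: "h *v ((k ** X ** h) *v x) = X *v (h *v x)" for x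
  proof -
    have "h *v ((k ** X ** h) *v x) = ((h ** k) ** X ** h) *v x" by (simp add: matrix_vector_mul_assoc matrix_mul_assoc)
    then show ?thesis using hk by (simp add: matrix_vector_mul_assoc)
  qed
  have "Bf ((k ** X ** h) *v x) y + Bf x ((k ** X ** h) *v y) = 0" for x y
  proof -
    have "Bf ((k ** X ** h) *v x) y + Bf x ((k ** X ** h) *v y)
       = Bf (X *v (h *v x)) (h *v y) + Bf (h *v x) (X *v (h *v y))"
      by (metis pres hv)
    moreover have "\<forall>x y. Bf (X *v x) y + Bf x (X *v y) = 0" using X so_Bf by blast
    ultimately show ?thesis by simp
  qed
  then show ?thesis using so_Bf by blast
qed

lemma stab_conj:
  assumes g: "g \<in> SOe"
  shows "X \<in> stabs (g *v n) \<longleftrightarrow> matrix_inv g ** X ** g \<in> stabs n"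
proof
  note inv = SOe_inv[OF g]
  assume "X \<in> stabs (g *v n)"
  then obtain l where X: "X \<in> so_n1" "X *v (g *v n) = l *\<^sub>R (g *v n)" by (auto simp: stabs_def)
  have "matrix_inv g ** X ** g \<in> so_n1"
    by (rule conj_so[OF _ inv(2) X(1)]) (rule SOe_pres[OF g])
  moreover have "(matrix_inv g ** X ** g) *v n = l *\<^sub>R n"
  proof -
    have "(matrix_inv g ** X ** g) *v n = matrix_inv g *v (X *v (g *v n))"
      by (simp add: matrix_vector_mul_assoc matrix_mul_assoc)
    also have "\<dots> = l *\<^sub>R ((matrix_inv g ** g) *v n)" using X(2)
      by (simp add: matrix_vector_mul_assoc[symmetric] matrix_vector_mult_scaleR)
    finally show ?thesis using inv by simp
  qed
  ultimately show "matrix_inv g ** X ** g \<in> stabs n" by (auto simp: stabs_def)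
next
  note inv = SOe_inv[OF g]
  assume "matrix_inv g ** X ** g \<in> stabs n"
  then obtain l where S: "matrix_inv g ** X ** g \<in> so_n1" "(matrix_inv g ** X ** g) *v n = l *\<^sub>R n"
    by (auto simp: stabs_def)
  have XX: "X = g ** (matrix_inv g ** X ** g) ** matrix_inv g"
    by (simp add: matrix_mul_assoc inv) (simp add: matrix_mul_assoc[symmetric] inv)
  have "g ** (matrix_inv g ** X ** g) ** matrix_inv g \<in> so_n1"
    by (rule conj_so[OF _ inv(1) S(1)]) (rule SOe_inv_pres[OF g])
  then have "X \<in> so_n1" using XX by simp
  moreover have "X *v (g *v n) = l *\<^sub>R (g *v n)"
  proof -
    have "g *v ((matrix_inv g ** X ** g) *v n) = ((g ** matrix_inv g) ** X ** g) *v n"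
      by (simp add: matrix_vector_mul_assoc matrix_mul_assoc)
    then have "X *v (g *v n) = g *v ((matrix_inv g ** X ** g) *v n)"
      using inv by (simp add: matrix_vector_mul_assoc)
    then show ?thesis using S(2) by (simp add: matrix_vector_mult_scaleR)
  qed
  ultimately show "X \<in> stabs (g *v n)" by (auto simp: stabs_def)
qed

lemma image_conj:
  fixes g k :: "'a::field^'m^'m"
  assumes "k ** g = mat 1" "g ** k = mat 1"
  shows "(\<lambda>X. g ** X ** k) ` A = {X. k ** X ** g \<in> A}"
proof (intro equalityI subsetI)
  fix X assume "X \<in> (\<lambda>X. g ** X ** k) ` A"
  then obtain S where "S \<in> A" "X = g ** S ** k" by auto
  then have "k ** X ** g = (k ** g) ** S ** (k ** g)" by (simp add: matrix_mul_assoc)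
  with \<open>S \<in> A\<close> assms show "X \<in> {X. k ** X ** g \<in> A}" by simp
next
  fix X assume "X \<in> {X. k ** X ** g \<in> A}"
  moreover have "X = g ** (k ** X ** g) ** k"
    by (simp add: matrix_mul_assoc assms) (simp add: matrix_mul_assoc[symmetric] assms)
  ultimately show "X \<in> (\<lambda>X. g ** X ** k) ` A" by auto
qed

definition ia :: "'n::finite + 1" where "ia = Inl (SOME a. True)"
definition it :: "'n::finite + 1" where "it = Inr 1"

lemma ia_it [simp]: "ia \<noteq> it" "it \<noteq> ia" by (simp_all add: ia_def it_def)
lemma jv_ia [simp]: "jv ia = 1" and jv_it [simp]: "jv it = -1" by (simp_all add: jv_def ia_def it_def)
lemma jv_other: "i \<noteq> it \<Longrightarrow> jv i = 1" by (simp add: jv_def it_def)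

definition npl :: "real^('n::finite+1)" where "npl = axis ia 1 + axis it 1"

lemma H_ent: "H_so $ i $ j = (if (i = ia \<and> j = it) \<or> (i = it \<and> j = ia) then 1 else 0)"
  by (simp add: H_so_def ia_def it_def)

lemma HX: "(H_so ** X) $ i $ j = (if i = ia then X$it$j else if i = it then X$ia$j else 0)"
proof -
  have "(H_so ** X) $ i $ j = (\<Sum>k\<in>UNIV. (if i = ia then (if it = k then 1 else 0) else
      if i = it then (if ia = k then 1 else 0) else 0) * X$k$j)"
    by (simp add: matrix_matrix_mult_def H_ent, rule sum.cong, auto)
  also have "\<dots> = (if i = ia then X$it$j else if i = it then X$ia$j else 0)"
    by (cases "i = ia"; cases "i = it") (simp_all add: sum_delta_l[where c="\<lambda>_. 1", simplified])
  finally show ?thesis .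
qed

lemma XH: "(X ** H_so) $ i $ j = (if j = ia then X$i$it else if j = it then X$i$ia else 0)"
proof -
  have "(X ** H_so) $ i $ j = (\<Sum>k\<in>UNIV. X$i$k * (if j = ia then (if k = it then 1 else 0) else
      if j = it then (if k = ia then 1 else 0) else 0))"
    by (simp add: matrix_matrix_mult_def H_ent, rule sum.cong, auto)
  also have "\<dots> = (if j = ia then X$i$it else if j = it then X$i$ia else 0)"
    by (cases "j = ia"; cases "j = it") (simp_all add: sum.delta' if_distrib[where f="\<lambda>x. _ * x"] cong: if_cong)
  finally show ?thesis .
qed

lemma X_npl: "(X *v npl) $ i = X$i$ia + X$i$it"
  by (simp add: npl_def matrix_vector_right_distrib matrix_vector_mult_basis column_def)

lemma npl_ent: "npl $ i = (if i = ia \<or> i = it then 1 else 0)"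
  by (auto simp: npl_def axis_def)

lemma std_sub: "std_min_parabolic so_n1 H_so 1 \<subseteq> stabs (npl::real^('n::finite+1))"
proof
  fix X :: "real^('n+1)^('n+1)"
  assume "X \<in> std_min_parabolic so_n1 H_so 1"
  then obtain Y Z where YZ: "X = Y + Z" "Y \<in> so_n1" "Z \<in> so_n1" "mbracket H_so Y = 0"
     "mbracket H_so Z = mat 1 ** Z" unfolding std_min_parabolic_def by auto
  have hY: "(if i = ia then Y$it$j else if i = it then Y$ia$j else 0) =
            (if j = ia then Y$i$it else if j = it then Y$i$ia else 0)" for i j
  proof -
    have "(H_so ** Y - Y ** H_so)$i$j = 0" using YZ(4) by (simp add: mbracket_def)
    then show ?thesis by (simp add: HX XH)
  qed
  have hZ: "(if i = ia then Z$it$j else if i = it then Z$ia$j else 0) -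
            (if j = ia then Z$i$it else if j = it then Z$i$ia else 0) = Z$i$j" for i j
  proof -
    have "(H_so ** Z - Z ** H_so)$i$j = Z$i$j" using YZ(5) by (simp add: mbracket_def)
    then show ?thesis by (simp add: HX XH)
  qed
  have e: "Z$it$ia - Z$ia$it = Z$ia$ia" "Z$it$it - Z$ia$ia = Z$ia$it" "Z$ia$ia - Z$it$it = Z$it$ia"
     "Z$ia$it - Z$it$ia = Z$it$it"
    using hZ[of ia ia] hZ[of ia it] hZ[of it ia] hZ[of it it] by simp_all
  have z: "Z$ia$ia = 0" "Z$ia$it = 0" "Z$it$ia = 0" "Z$it$it = 0"
    using e by linarith+
  have "X *v npl = (Y$ia$ia + Y$ia$it) *\<^sub>R npl"
  proof (subst vec_eq_iff, intro allI)
    fix i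
    show "(X *v npl) $ i = ((Y$ia$ia + Y$ia$it) *\<^sub>R npl) $ i"
    proof (cases "i = ia \<or> i = it")
      case True
      then show ?thesis using z hY[of ia ia] hY[of ia it] YZ(1) by (auto simp: X_npl npl_ent)
    next
      case False
      then show ?thesis using hY[of i ia] hY[of i it] hZ[of i ia] hZ[of i it] YZ(1)
        by (simp add: X_npl npl_ent)
    qed
  qed
  moreover have "X \<in> so_n1" using YZ so_add by simp
  ultimately show "X \<in> stabs npl" unfolding stabs_def by blast
qed

lemma std_sup: "stabs (npl::real^('n::finite+1)) \<subseteq> std_min_parabolic so_n1 H_so 1"
proof
  fix X :: "real^('n+1)^('n+1)"
  assume "X \<in> stabs npl"
  then obtain l where X: "X \<in> so_n1" "X *v npl = l *\<^sub>R npl" by (auto simp: stabs_def)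
  have soX: "X$j$i * jv j + jv i * X$i$j = 0" for i j using X(1) by (simp add: so_iff)
  have d: "X$i$i = 0" for i using soX[of i i] by (simp add: jv_def split: if_splits)
  have f1: "X$it$ia = X$ia$it" using soX[of ia it] by simp
  have f2: "X$j$ia = - X$ia$j" if "j \<noteq> ia" "j \<noteq> it" for j
    using soX[of ia j] that by (simp add: jv_other)
  have f3: "X$j$it = X$it$j" if "j \<noteq> ia" "j \<noteq> it" for j
    using soX[of it j] that by (simp add: jv_other)
  have st: "X$i$ia + X$i$it = 0" if "i \<noteq> ia" "i \<noteq> it" for i
  proof -
    have "(X *v npl)$i = (l *\<^sub>R npl)$i" using X(2) by simp
    then show ?thesis using that by (simp add: X_npl npl_ent)
  qed
  define Z :: "real^('n+1)^('n+1)" where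
    "Z = (\<chi> i j. if (i = ia \<or> i = it) \<noteq> (j = ia \<or> j = it) then X$i$j else 0)"
  define Y where "Y = X - Z"
  have Zent: "Z$i$j = (if (i = ia \<or> i = it) \<noteq> (j = ia \<or> j = it) then X$i$j else 0)" for i j
    by (simp add: Z_def)
  have Yent: "Y$i$j = (if (i = ia \<or> i = it) \<noteq> (j = ia \<or> j = it) then 0 else X$i$j)" for i j
    by (simp only: Y_def vector_minus_component Zent) auto
  have Zso: "Z \<in> so_n1"
    unfolding so_iff
  proof (intro allI)
    fix i j
    show "Z$j$i * jv j + jv i * Z$i$j = 0"
      using soX[of i j] by (cases "(i = ia \<or> i = it) \<noteq> (j = ia \<or> j = it)") (auto simp: Zent mult.commute)
  qed
  have Yso: "Y \<in> so_n1" unfolding Y_def using so_diff[OF X(1) Zso] .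
  have "mbracket H_so Y = 0"
  proof (subst vec_eq_iff, intro allI, subst vec_eq_iff, intro allI)
    fix i j
    have c3: "\<And>k. k = ia \<or> k = it \<or> (k \<noteq> ia \<and> k \<noteq> it)" by blast
    show "mbracket H_so Y $ i $ j = 0 $ i $ j"
      unfolding mbracket_def vector_minus_component HX XH Yent
      using c3[of i] c3[of j] d f1 by auto
  qed
  moreover have "mbracket H_so Z = mat 1 ** Z"
  proof (subst vec_eq_iff, intro allI, subst vec_eq_iff, intro allI)
    fix i j
    have c3: "\<And>k. k = ia \<or> k = it \<or> (k \<noteq> ia \<and> k \<noteq> it)" by blast
    show "mbracket H_so Z $ i $ j = (mat 1 ** Z) $ i $ j"
      unfolding mbracket_def matrix_mul_lid vector_minus_component HX XH Zent
    proof -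
      consider "i = ia" | "i = it" | "i \<noteq> ia" "i \<noteq> it" by blast
      then show "(if i = ia then if (it = ia \<or> it = it) \<noteq> (j = ia \<or> j = it) then X $ it $ j else 0
          else if i = it then if (ia = ia \<or> ia = it) \<noteq> (j = ia \<or> j = it) then X $ ia $ j else 0 else 0) -
         (if j = ia then if (i = ia \<or> i = it) \<noteq> (it = ia \<or> it = it) then X $ i $ it else 0
          else if j = it then if (i = ia \<or> i = it) \<noteq> (ia = ia \<or> ia = it) then X $ i $ ia else 0 else 0) =
         (if (i = ia \<or> i = it) \<noteq> (j = ia \<or> j = it) then X $ i $ j else 0)"
      proof cases
        case 1 then show ?thesis using c3[of j] d f2 f3 st[of j] by auto
      next
        case 2 then show ?thesis using c3[of j] d f2 f3 st[of j] by auto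
      next
        case 3
        consider "j = ia" | "j = it" | "j \<noteq> ia" "j \<noteq> it" by blast
        then show ?thesis
        proof cases
          case 1 then show ?thesis using \<open>i \<noteq> ia\<close> \<open>i \<noteq> it\<close> st[of i] by auto
        next
          case 2 then show ?thesis using \<open>i \<noteq> ia\<close> \<open>i \<noteq> it\<close> st[of i] by auto
        next
          case 3 then show ?thesis using \<open>i \<noteq> ia\<close> \<open>i \<noteq> it\<close> by auto
        qed
      qed
    qed
  qed
  moreover have "X = Y + Z" by (simp add: Y_def)
  ultimately show "X \<in> std_min_parabolic so_n1 H_so 1"
    unfolding std_min_parabolic_def using Yso Zso by blast
qed

lemma std_eq: "std_min_parabolic so_n1 H_so 1 = stabs (npl::real^('n::finite+1))"
  using std_sub std_sup by blast

lemma min_par_so: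
  "min_parabolic (SOe::(real^('n::finite+1)^('n+1)) set) so_n1 H_so 1 p \<longleftrightarrow>
     (\<exists>g\<in>SOe. p = stabs (g *v npl))"
proof -
  have "(\<lambda>X. g ** X ** matrix_inv g) ` std_min_parabolic so_n1 H_so 1 = stabs (g *v npl)"
    if g: "g \<in> (SOe::(real^('n+1)^('n+1)) set)" for g
    unfolding image_conj[OF SOe_inv[OF g]] std_eq using stab_conj[OF g] by blast
  then show ?thesis unfolding min_parabolic_def by auto
qed

lemma Bf_spacelike:
  assumes "x $ it = 0" "Bf x x = 0" shows "x = 0"
proof -
  have "Bf x x = (\<Sum>i\<in>UNIV. x$i * x$i)"
    unfolding Bf_def by (rule sum.cong) (use assms(1) in \<open>auto simp: jv_def it_def\<close>)
  then have "\<forall>i\<in>UNIV. x$i * x$i = 0" using assms(2)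
    by (subst sum_nonneg_eq_0_iff[symmetric]) auto
  then show ?thesis by (simp add: vec_eq_iff)
qed

lemma null_par:
  assumes n: "Bf n n = 0" and m: "Bf m m = 0" and nm: "Bf n m = 0" and nz: "n \<noteq> 0"
  shows "\<exists>l. m = l *\<^sub>R n"
proof -
  define z where "z = m$it *\<^sub>R n - n$it *\<^sub>R m"
  have "z$it = 0" by (simp add: z_def)
  moreover have "Bf z z = 0" using n m nm by (simp add: z_def Bf_lin Bf_sym[of m n])
  ultimately have "z = 0" by (rule Bf_spacelike)
  have "n$it \<noteq> 0" using Bf_spacelike[of n] n nz by auto
  have "m = (m$it / n$it) *\<^sub>R n"
  proof -
    have "n$it *\<^sub>R m = m$it *\<^sub>R n" using \<open>z = 0\<close> unfolding z_def by simp
    then have "(1 / n$it) *\<^sub>R (n$it *\<^sub>R m) = (1 / n$it) *\<^sub>R (m$it *\<^sub>R n)" by simp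
    then show ?thesis using \<open>n$it \<noteq> 0\<close> by simp
  qed
  then show ?thesis by blast
qed

lemma stabs_scale: assumes "l \<noteq> 0" shows "stabs (l *\<^sub>R n) = stabs n"
proof -
  have "(\<exists>m. X *v (l *\<^sub>R n) = m *\<^sub>R (l *\<^sub>R n)) \<longleftrightarrow> (\<exists>m. X *v n = m *\<^sub>R n)" for X
  proof
    assume "\<exists>m. X *v (l *\<^sub>R n) = m *\<^sub>R (l *\<^sub>R n)"
    then obtain m where "X *v (l *\<^sub>R n) = m *\<^sub>R (l *\<^sub>R n)" by blast
    then have "l *\<^sub>R (X *v n) = l *\<^sub>R (m *\<^sub>R n)"
      by (simp only: matrix_vector_mult_scaleR scaleR_left_commute)
    then have "(1/l) *\<^sub>R (l *\<^sub>R (X *v n)) = (1/l) *\<^sub>R (l *\<^sub>R (m *\<^sub>R n))" by (rule arg_cong)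
    then have "X *v n = m *\<^sub>R n" using assms by (simp only: scaleR_scaleR) simp
    then show "\<exists>m. X *v n = m *\<^sub>R n" by blast
  next
    assume "\<exists>m. X *v n = m *\<^sub>R n"
    then obtain m where "X *v n = m *\<^sub>R n" by blast
    then have "X *v (l *\<^sub>R n) = m *\<^sub>R (l *\<^sub>R n)"
      by (simp add: matrix_vector_mult_scaleR scaleR_left_commute)
    then show "\<exists>m. X *v (l *\<^sub>R n) = m *\<^sub>R (l *\<^sub>R n)" by blast
  qed
  then show ?thesis unfolding stabs_def by blast
qed

lemma Bf_axis_r: "Bf x (axis j 1) = jv j * x$j"
proof -
  have "Bf x (axis j 1) = (\<Sum>k\<in>UNIV. (jv k * x$k) * (if k = j then 1 else 0))"
    unfolding Bf_def by (rule sum.cong) (auto simp: axis_def)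
  then show ?thesis by (simp add: sum_delta_r)
qed

lemma Bf_axis: "Bf (axis i 1) (axis j 1) = (if i = j then jv i else 0)"
  by (simp add: Bf_axis_r, simp add: axis_def)

lemma npl_null: "Bf npl npl = 0"
  by (simp add: npl_def Bf_lin Bf_axis)

lemma npl_nz: "(npl::real^('n::finite+1)) \<noteq> 0"
proof
  assume "(npl::real^('n::finite+1)) = 0" then have "(npl::real^('n::finite+1)) $ ia = 0" by simp
  then show False by (simp add: npl_ent)
qed

lemma SOe_npl: fixes g :: "real^('n::finite+1)^('n+1)" assumes "g \<in> SOe" shows "Bf (g *v npl) (g *v npl) = 0" "g *v npl \<noteq> 0"
proof -
  show "Bf (g *v npl) (g *v npl) = 0" using SOe_pres[OF assms] npl_null by simp
  show "g *v npl \<noteq> 0"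
  proof
    assume "g *v npl = 0"
    then have "matrix_inv g *v (g *v npl) = 0" by simp
    then have "(npl::real^('n+1)) = 0" using SOe_inv[OF assms] by (simp add: matrix_vector_mul_assoc)
    then show False using npl_nz[where 'n='n] by simp
  qed
qed



lemma smv: "(k *\<^sub>R A) *v v = k *\<^sub>R (A *v v)" for A :: "real^'m::finite^'n::finite"
  by (simp add: scaleR_matrix_vector_assoc)

lemma so_solve:
  fixes n1 n2 n3 :: "real^('n::finite+1)"
  assumes N: "Bf n1 n1 = 0" "Bf n2 n2 = 0" "Bf n3 n3 = 0"
    and C: "Bf n1 n2 \<noteq> 0" "Bf n1 n3 \<noteq> 0" "Bf n2 n3 \<noteq> 0"
    and A: "a1 \<in> so_n1" "a2 \<in> so_n1" "a3 \<in> so_n1"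
  shows "\<exists>y\<in>so_n1. a1 - y \<in> stabs n1 \<and> a2 - y \<in> stabs n2 \<and> a3 - y \<in> stabs n3"
proof -
  define c where "c = Bf n1 n2"
  have c0: "c \<noteq> 0" using C by (simp add: c_def)
  have c21: "Bf n2 n1 = c" by (simp add: c_def Bf_sym)
  define d where "d = (1/c) *\<^sub>R ((a2 - a1) *v n2)"
  define P where "P = Wm d n1"
  define y0 where "y0 = a1 + P"
  define r where "r = (a3 - y0) *v n3"
  define pr where "pr = (\<lambda>x. x - (Bf x n2 / c) *\<^sub>R n1 - (Bf x n1 / c) *\<^sub>R n2)"
  define u where "u = pr n3"
  define w where "w = pr r"
  define \<alpha> where "\<alpha> = Bf n3 n2 / c"
  define \<beta> where "\<beta> = Bf n3 n1 / c"
  define t where "t = Bf w u / Bf u u"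
  define x where "x = Bf r n2 / c"
  define yy where "yy = Bf r n1 / c"
  define s where "s = (x - t * \<alpha>) / (\<alpha> * c)"
  define Q where "Q = s *\<^sub>R Wm n1 n2 + (1 / Bf u u) *\<^sub>R Wm w u"
  define y where "y = y0 + Q"
  have pr1: "Bf (pr v) n1 = 0" for v
    using c0 N by (simp add: pr_def Bf_lin c21)
  have pr2: "Bf (pr v) n2 = 0" for v
    using c0 N by (simp add: pr_def Bf_lin c_def)
  have a0: "\<alpha> \<noteq> 0" "\<beta> \<noteq> 0" using C c0 by (auto simp: \<alpha>_def \<beta>_def Bf_sym)
  have n3e: "n3 = u + \<alpha> *\<^sub>R n1 + \<beta> *\<^sub>R n2" by (simp add: u_def pr_def \<alpha>_def \<beta>_def)
  have re: "r = w + x *\<^sub>R n1 + yy *\<^sub>R n2" by (simp add: w_def pr_def x_def yy_def)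
  have u1: "Bf u n1 = 0" "Bf u n2 = 0" "Bf w n1 = 0" "Bf w n2 = 0"
    using pr1 pr2 by (simp_all add: u_def w_def)
  have u1': "Bf n1 u = 0" "Bf n2 u = 0" "Bf n1 w = 0" "Bf n2 w = 0"
    using u1 by (simp_all add: Bf_sym)
  have uu: "Bf u u = - 2 * \<alpha> * \<beta> * c"
  proof -
    have "0 = Bf n3 n3" using N by simp
    also have "\<dots> = Bf u u + 2 * \<alpha> * \<beta> * c"
      unfolding n3e using N u1 u1' by (simp add: Bf_lin c21 c_def[symmetric] algebra_simps)
    finally show ?thesis by simp
  qed
  have uu0: "Bf u u \<noteq> 0" using uu a0 c0 by simp
  have un3: "Bf u n3 = Bf u u" "Bf w n3 = Bf w u"
    unfolding n3e using u1 by (simp_all add: Bf_lin)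
  have b13: "Bf n1 n3 = \<beta> * c" "Bf n2 n3 = \<alpha> * c"
    using c0 by (simp_all add: \<alpha>_def \<beta>_def Bf_sym)
  have P_so: "P \<in> so_n1" by (simp add: P_def Wm_so)
  have Q_so: "Q \<in> so_n1" by (simp add: Q_def so_add so_scaleR Wm_so)
  have y_so: "y \<in> so_n1" using A P_so Q_so by (simp add: y_def y0_def so_add)
  have Pn1: "P *v n1 = (- Bf d n1) *\<^sub>R n1" using N by (simp add: P_def Wm_mv)
  have Qn1: "Q *v n1 = (s * c) *\<^sub>R n1"
    using N u1 by (simp add: Q_def Wm_mv smv matrix_vector_mult_add_rdistrib c21)
  have S1: "a1 - y \<in> stabs n1"
  proof -
    have "(a1 - y) *v n1 = a1 *v n1 - (a1 *v n1 + P *v n1 + Q *v n1)"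
      by (simp only: y_def y0_def matrix_vector_mult_diff_rdistrib matrix_vector_mult_add_rdistrib)
    also have "\<dots> = (Bf d n1 - s * c) *\<^sub>R n1" unfolding Pn1 Qn1 by (simp add: algebra_simps)
    finally have "(a1 - y) *v n1 = (Bf d n1 - s * c) *\<^sub>R n1" .
    moreover have "a1 - y \<in> so_n1" using A y_so by (simp add: so_diff)
    ultimately show ?thesis unfolding stabs_def by blast
  qed
  have "Bf d n2 = 0"
    using so_Bf_self[OF so_diff[OF A(2) A(1)], of n2] by (simp add: d_def Bf_lin)
  then have Pn2: "P *v n2 = (a2 - a1) *v n2"
    using c0 by (simp add: P_def Wm_mv c_def[symmetric] d_def)
  have Qn2: "Q *v n2 = (- (s * c)) *\<^sub>R n2"
    using N u1 by (simp add: Q_def Wm_mv smv matrix_vector_mult_add_rdistrib c_def)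
  have S2: "a2 - y \<in> stabs n2"
  proof -
    have "(a2 - y) *v n2 = a2 *v n2 - (a1 *v n2 + P *v n2 + Q *v n2)"
      by (simp only: y_def y0_def matrix_vector_mult_diff_rdistrib matrix_vector_mult_add_rdistrib)
    also have "\<dots> = (s * c) *\<^sub>R n2" unfolding Pn2 Qn2 by (simp add: algebra_simps matrix_vector_mult_diff_rdistrib)
    finally have "(a2 - y) *v n2 = (s * c) *\<^sub>R n2" .
    moreover have "a2 - y \<in> so_n1" using A y_so by (simp add: so_diff)
    ultimately show ?thesis unfolding stabs_def by blast
  qed
  have rn3: "Bf r n3 = 0"
    using so_Bf_self[OF so_diff[OF A(3)], of y0 n3] A P_so by (simp add: r_def y0_def so_add)
  have Qn3: "Q *v n3 = (s * (\<alpha> * c)) *\<^sub>R n1 - (s * (\<beta> * c)) *\<^sub>R n2 + w - t *\<^sub>R u"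
    using uu0 un3 b13 by (simp add: Q_def Wm_mv smv matrix_vector_mult_add_rdistrib t_def algebra_simps)
  define k1 where "k1 = x - s * (\<alpha> * c) - t * \<alpha>"
  define k2 where "k2 = yy + s * (\<beta> * c) - t * \<beta>"
  have "(a3 - y) *v n3 = r - Q *v n3"
    by (simp only: r_def y_def matrix_vector_mult_add_rdistrib matrix_vector_mult_diff_rdistrib diff_add_eq_diff_diff_swap) (simp add: algebra_simps)
  also have "\<dots> = t *\<^sub>R n3 + k1 *\<^sub>R n1 + k2 *\<^sub>R n2"
  proof -
    have ue: "u = n3 - \<alpha> *\<^sub>R n1 - \<beta> *\<^sub>R n2" using n3e by (simp add: algebra_simps)
    show ?thesis unfolding Qn3 k1_def k2_def ue re by (simp add: algebra_simps)
  qed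
  finally have v3: "(a3 - y) *v n3 = t *\<^sub>R n3 + k1 *\<^sub>R n1 + k2 *\<^sub>R n2" .
  have k1: "k1 = 0" using a0 c0 by (simp add: k1_def s_def field_simps)
  have "Bf r n3 = Bf w u + x * (\<beta> * c) + yy * (\<alpha> * c)"
    unfolding re using un3 b13 by (simp add: Bf_lin)
  moreover have "Bf w u = t * Bf u u" using uu0 by (simp add: t_def)
  ultimately have e: "t * (- 2 * \<alpha> * \<beta> * c) + x * (\<beta> * c) + yy * (\<alpha> * c) = 0"
    using rn3 uu by simp
  have "k2 * \<alpha> * c = t * (- 2 * \<alpha> * \<beta> * c) + x * (\<beta> * c) + yy * (\<alpha> * c)"
    using a0 c0 by (simp add: k2_def s_def field_simps)
  then have k2: "k2 = 0" using e a0 c0 by simp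
  have S3: "a3 - y \<in> stabs n3"
  proof -
    have "(a3 - y) *v n3 = t *\<^sub>R n3" using v3 k1 k2 by simp
    moreover have "a3 - y \<in> so_n1" using A y_so by (simp add: so_diff)
    ultimately show ?thesis unfolding stabs_def by blast
  qed
  show ?thesis using y_so S1 S2 S3 by blast
qed



lemma pres_to_J:
  fixes g :: "real^('n::finite+1)^('n+1)"
  assumes "\<And>x y. Bf (g *v x) (g *v y) = Bf x y"
  shows "transpose g ** J_Lor ** g = J_Lor"
proof -
  have e: "Bf (g *v x) (g *v y) = inner x ((transpose g ** J_Lor ** g) *v y)" for x y
    by (metis Bf_inner dot_lmul_matrix matrix_vector_mul_assoc transpose_matrix_vector transpose_transpose)
  have "(transpose g ** J_Lor ** g) $ i $ j = J_Lor $ i $ j" for i j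
  proof -
    have "inner (axis i 1) ((transpose g ** J_Lor ** g) *v axis j 1) = inner (axis i 1) (J_Lor *v axis j 1)"
      using e assms Bf_inner by metis
    then show ?thesis by (simp add: matrix_vector_mult_basis inner_axis' column_def)
  qed
  then show ?thesis by (simp add: vec_eq_iff)
qed

definition dg :: "('n::finite+1 \<Rightarrow> real) \<Rightarrow> real^('n+1)^('n+1)" where
  "dg f = (\<chi> i j. if i = j then f i else 0)"

lemma dg_mv: "dg f *v x = (\<chi> i. f i * x$i)"
proof -
  have "(\<Sum>j\<in>UNIV. (if i = j then f i else 0) * x$j) = f i * x$i" for i by (rule sum_delta_l)
  then show ?thesis by (simp add: vec_eq_iff matrix_vector_mult_def dg_def)
qed

lemma dg_pres: assumes "\<And>i. f i * f i = 1" shows "Bf (dg f *v x) (dg f *v y) = Bf x y"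
proof -
  have e: "jv i * (f i * x$i) * (f i * y$i) = jv i * x$i * y$i" for i
  proof -
    have "jv i * (f i * x$i) * (f i * y$i) = (f i * f i) * (jv i * x$i * y$i)" by (simp add: algebra_simps)
    then show ?thesis using assms[of i] by simp
  qed
  show ?thesis unfolding Bf_def dg_mv by (simp add: e)
qed

lemma dg_SOe:
  assumes "\<And>i. f i * f i = 1" "f it = 1" "prod f UNIV = 1"
  shows "dg f \<in> SOe"
proof -
  have "transpose (dg f) ** J_Lor ** dg f = J_Lor" by (rule pres_to_J) (rule dg_pres[OF assms(1)])
  moreover have "det (dg f) = 1" using assms(3) by (subst det_diagonal) (auto simp: dg_def)
  moreover have "dg f $ Inr 1 $ Inr 1 > 0" using assms(2) by (simp add: dg_def it_def)
  ultimately show ?thesis by (simp add: SOe_def)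
qed

definition pm :: "('n::finite+1 \<Rightarrow> 'n+1) \<Rightarrow> real^('n+1)^('n+1)" where
  "pm s = (\<chi> i j. if s i = j then 1 else 0)"

lemma pm_mv: "pm s *v x = (\<chi> i. x $ s i)"
proof -
  have "(\<Sum>j\<in>UNIV. (if s i = j then 1 else 0) * x$j) = x $ s i" for i
    using sum_delta_l[of "s i" "\<lambda>_. 1" "\<lambda>j. x$j"] by simp
  then show ?thesis by (simp add: vec_eq_iff matrix_vector_mult_def pm_def)
qed

lemma pm_pres:
  assumes p: "s permutes UNIV" and j: "\<And>i. jv (s i) = jv i"
  shows "Bf (pm s *v x) (pm s *v y) = Bf x y"
proof -
  have "Bf (pm s *v x) (pm s *v y) = (\<Sum>i\<in>UNIV. jv (s i) * x$(s i) * y$(s i))"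
    by (simp add: Bf_def pm_mv j)
  also have "\<dots> = (\<Sum>i\<in>UNIV. jv i * x$i * y$i)"
    using sum.permute[OF p, of "\<lambda>i. jv i * x$i * y$i"] by (simp add: o_def)
  finally show ?thesis by (simp add: Bf_def)
qed

lemma pm_det: fixes s :: "'n::finite+1 \<Rightarrow> 'n+1" assumes p: "s permutes UNIV" shows "det (pm s) = of_int (sign s)"
proof -
  have "pm s = (\<chi> i. (mat 1 :: real^('n+1)^('n+1)) $ s i)"
    by (simp add: pm_def vec_eq_iff mat_def)
  then show ?thesis using det_permute_rows[OF p, of "mat 1 :: real^('n+1)^('n+1)"] by simp
qed



lemma stabs_sub: "stabs n \<subseteq> so_n1" by (auto simp: stabs_def)

lemma stabs_diff: assumes "X \<in> stabs n" "Y \<in> stabs n" shows "X - Y \<in> stabs n"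
proof -
  obtain l m where "X \<in> so_n1" "Y \<in> so_n1" "X *v n = l *\<^sub>R n" "Y *v n = m *\<^sub>R n"
    using assms by (auto simp: stabs_def)
  then show ?thesis unfolding stabs_def
    by (auto simp: so_diff matrix_vector_mult_diff_rdistrib scaleR_diff_left intro!: exI[of _ "l - m"])
qed

lemma so_sum:
  fixes g1 g2 g3 :: "real^('n::finite+1)^('n+1)"
  assumes g: "g1 \<in> SOe" "g2 \<in> SOe" "g3 \<in> SOe"
    and C: "Bf (g1 *v npl) (g2 *v npl) \<noteq> 0" "Bf (g1 *v npl) (g3 *v npl) \<noteq> 0" "Bf (g2 *v npl) (g3 *v npl) \<noteq> 0"
  shows "sum_with_diagonal_is_all so_n1 (stabs (g1 *v npl)) (stabs (g2 *v npl)) (stabs (g3 *v npl))"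
proof (rule all_if_solvable[OF stabs_sub stabs_sub stabs_sub])
  show "\<And>x y. x \<in> so_n1 \<Longrightarrow> y \<in> so_n1 \<Longrightarrow> x + y \<in> so_n1" by (rule so_add)
  show "\<And>x y. x \<in> so_n1 \<Longrightarrow> y \<in> so_n1 \<Longrightarrow> x - y \<in> so_n1" by (rule so_diff)
  fix a b c :: "real^('n+1)^('n+1)" assume "a \<in> so_n1" "b \<in> so_n1" "c \<in> so_n1"
  from so_solve[OF SOe_npl(1)[OF g(1)] SOe_npl(1)[OF g(2)] SOe_npl(1)[OF g(3)] C this]
  show "\<exists>y\<in>so_n1. a - y \<in> stabs (g1 *v npl) \<and> b - y \<in> stabs (g2 *v npl) \<and> c - y \<in> stabs (g3 *v npl)" .
qed

lemma exists_b0: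
  assumes "CARD('n::finite) \<ge> 2" shows "\<exists>b0::'n. b0 \<noteq> (SOME a. True)"
proof (rule ccontr)
  assume "\<not> (\<exists>b0::'n. b0 \<noteq> (SOME a. True))"
  then have "(UNIV::'n set) = {SOME a. True}" by auto
  then have "CARD('n) = card {SOME a::'n. True}" by (rule arg_cong)
  with assms show False by simp
qed

lemma so_proper:
  fixes g :: "real^('n::finite+1)^('n+1)"
  assumes card: "CARD('n) \<ge> 2" and g: "g \<in> SOe"
  shows "\<exists>E\<in>so_n1. E \<notin> stabs (g *v npl)"
proof -
  obtain b0 :: 'n where b0: "b0 \<noteq> (SOME a. True)" using exists_b0[OF card] by blast
  define ib :: "'n + 1" where "ib = Inl b0"
  have ib: "ib \<noteq> ia" "ib \<noteq> it" using b0 by (auto simp: ib_def ia_def it_def)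
  define E :: "real^('n+1)^('n+1)" where "E = Wm (axis ia 1) (axis ib 1)"
  have "E *v npl = - axis ib 1"
    using ib by (simp add: E_def Wm_mv Bf_sym[of _ npl] Bf_axis_r npl_ent)
  have Enot: "E \<notin> stabs npl"
  proof
    assume "E \<in> stabs npl"
    then obtain l where "E *v npl = l *\<^sub>R npl" by (auto simp: stabs_def)
    then have "- axis ib 1 = l *\<^sub>R (npl::real^('n+1))" using \<open>E *v npl = - axis ib 1\<close> by simp
    then have "(- axis ib 1) $ it = (l *\<^sub>R (npl::real^('n+1))) $ it"
      "(- axis ib 1) $ ib = (l *\<^sub>R (npl::real^('n+1))) $ ib" by simp_all
    then show False using ib by (simp add: npl_ent axis_def)
  qed
  note inv = SOe_inv[OF g]
  define E' where "E' = g ** E ** matrix_inv g"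
  have "E' \<in> so_n1" unfolding E'_def
    by (rule conj_so[OF _ inv(1)]) (simp_all add: SOe_inv_pres[OF g] E_def Wm_so)
  moreover have "E' \<notin> stabs (g *v npl)"
  proof
    assume "E' \<in> stabs (g *v npl)"
    then have "matrix_inv g ** E' ** g \<in> stabs npl" using stab_conj[OF g] by blast
    moreover have "matrix_inv g ** E' ** g = E"
      unfolding E'_def by (simp add: matrix_mul_assoc inv) (simp add: matrix_mul_assoc[symmetric] inv)
    ultimately show False using Enot by simp
  qed
  ultimately show ?thesis by blast
qed



lemma det_dg: "det (dg f) = prod f UNIV"
  by (subst det_diagonal) (auto simp: dg_def)

lemma pm_mm: "(pm s ** D) $ i $ j = D $ (s i) $ j"
proof -
  have "(\<Sum>k\<in>UNIV. (if s i = k then 1 else 0) * D$k$j) = D$(s i)$j"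
    using sum_delta_l[of "s i" "\<lambda>_. 1" "\<lambda>k. D$k$j"] by simp
  then show ?thesis by (simp add: matrix_matrix_mult_def pm_def)
qed

lemma so_exists:
  assumes card: "CARD('n::finite) \<ge> 2"
  shows "\<exists>g1 g2 g3 :: real^('n+1)^('n+1). g1 \<in> SOe \<and> g2 \<in> SOe \<and> g3 \<in> SOe \<and>
     Bf (g1 *v npl) (g2 *v npl) \<noteq> 0 \<and> Bf (g1 *v npl) (g3 *v npl) \<noteq> 0 \<and> Bf (g2 *v npl) (g3 *v npl) \<noteq> 0"
proof -
  obtain b0 :: 'n where b0: "b0 \<noteq> (SOME a. True)" using exists_b0[OF card] by blast
  define ib :: "'n + 1" where "ib = Inl b0"
  have ib: "ib \<noteq> ia" "ib \<noteq> it" "ia \<noteq> ib" "it \<noteq> ib" using b0 by (auto simp: ib_def ia_def it_def)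
  define f1 :: "'n+1 \<Rightarrow> real" where "f1 = (\<lambda>_. 1)"
  define f2 :: "'n+1 \<Rightarrow> real" where "f2 = (\<lambda>i. if i = ia \<or> i = ib then -1 else 1)"
  define f3 :: "'n+1 \<Rightarrow> real" where "f3 = (\<lambda>i. if i = ia then -1 else 1)"
  define sw where "sw = Transposition.transpose ia ib"
  have sw: "sw permutes UNIV" by (simp add: sw_def permutes_swap_id)
  have jsw: "jv (sw i) = jv i" for i
    using ib by (cases "i = ia"; cases "i = ib") (auto simp: sw_def jv_other)
  define g1 where "g1 = dg f1"
  define g2 where "g2 = dg f2"
  define g3 where "g3 = pm sw ** dg f3"
  have p2: "prod f2 UNIV = 1"
  proof -
    have "prod f2 UNIV = prod (\<lambda>_. -1) (UNIV \<inter> {x. x = ia \<or> x = ib}) * prod (\<lambda>_. 1) (UNIV \<inter> - {x. x = ia \<or> x = ib})"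
      unfolding f2_def by (rule prod.If_cases) simp
    also have "UNIV \<inter> {x. x = ia \<or> x = ib} = {ia, ib}" by auto
    finally show ?thesis using ib by simp
  qed
  have p3: "prod f3 UNIV = -1"
  proof -
    have "prod f3 UNIV = f3 ia * prod f3 (UNIV - {ia})" by (rule prod.remove) simp_all
    moreover have "prod f3 (UNIV - {ia}) = 1" by (rule prod.neutral) (simp add: f3_def)
    ultimately show ?thesis by (simp add: f3_def)
  qed
  have G1: "g1 \<in> SOe" unfolding g1_def by (rule dg_SOe) (simp_all add: f1_def)
  have G2: "g2 \<in> SOe" unfolding g2_def by (rule dg_SOe) (use p2 ib in \<open>simp_all add: f2_def\<close>)
  have G3: "g3 \<in> SOe"
  proof -
    have "Bf (g3 *v x) (g3 *v y) = Bf x y" for x y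
    proof -
      have "Bf (g3 *v x) (g3 *v y) = Bf (pm sw *v (dg f3 *v x)) (pm sw *v (dg f3 *v y))"
        by (simp add: g3_def matrix_vector_mul_assoc)
      also have "\<dots> = Bf (dg f3 *v x) (dg f3 *v y)" by (rule pm_pres[OF sw jsw])
      also have "\<dots> = Bf x y" by (rule dg_pres) (simp add: f3_def)
      finally show ?thesis .
    qed
    then have "transpose g3 ** J_Lor ** g3 = J_Lor" by (rule pres_to_J)
    moreover have "det g3 = 1"
    proof -
      have "det (pm sw) = -1" using pm_det[OF sw] ib unfolding sw_def by (simp add: sign_swap_id)
      then show ?thesis by (simp add: g3_def det_mul det_dg p3)
    qed
    moreover have "g3 $ Inr 1 $ Inr 1 > 0"
    proof -
      have "g3 $ it $ it = dg f3 $ (sw it) $ it" by (simp add: g3_def pm_mm)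
      also have "\<dots> = 1" using ib by (simp add: sw_def dg_def f3_def)
      finally show ?thesis by (simp add: it_def)
    qed
    ultimately show ?thesis by (simp add: SOe_def)
  qed
  have n1: "g1 *v npl = axis ia 1 + axis it 1"
    by (simp add: g1_def dg_mv f1_def npl_def vec_eq_iff)
  have n2: "g2 *v npl = axis it 1 - axis ia 1"
    unfolding g2_def dg_mv using ib by (auto simp: vec_eq_iff f2_def npl_ent axis_def)
  have n3: "g3 *v npl = axis it 1 - axis ib 1"
  proof -
    have "g3 *v npl = pm sw *v (dg f3 *v npl)" by (simp add: g3_def matrix_vector_mul_assoc)
    also have "\<dots> = axis it 1 - axis ib 1"
      unfolding pm_mv dg_mv using ib
      by (auto simp: vec_eq_iff f3_def npl_ent axis_def sw_def transpose_eq_iff)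
    finally show ?thesis .
  qed
  have "Bf (g1 *v npl) (g2 *v npl) = -2" "Bf (g1 *v npl) (g3 *v npl) = -1" "Bf (g2 *v npl) (g3 *v npl) = -1"
    unfolding n1 n2 n3 using ib by (simp_all add: Bf_lin Bf_axis)
  then show ?thesis using G1 G2 G3 by (intro exI[of _ g1] exI[of _ g2] exI[of _ g3]) simp
qed



lemma so_zero: "0 \<in> so_n1" by (simp add: so_iff)

lemma pair_ne:
  fixes g h :: "real^('n::finite+1)^('n+1)"
  assumes g: "g \<in> SOe" and h: "h \<in> SOe" and ne: "stabs (g *v npl) \<noteq> stabs (h *v npl)"
  shows "Bf (g *v npl) (h *v npl) \<noteq> 0"
proof
  assume B: "Bf (g *v npl) (h *v npl) = 0"
  obtain l where l: "h *v npl = l *\<^sub>R (g *v npl)"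
    using null_par[OF SOe_npl(1)[OF g] SOe_npl(1)[OF h] B SOe_npl(2)[OF g]] by blast
  have "l \<noteq> 0" using l SOe_npl(2)[OF h] by auto
  then have "stabs (h *v npl) = stabs (g *v npl)" using l stabs_scale by simp
  with ne show False by simp
qed

lemma so_main:
  assumes card: "CARD('n::finite) \<ge> 2"
  shows
    "((\<forall>p1 p2 p3. min_parabolic (SOe::(real^('n + 1)^('n + 1)) set) so_n1 H_so 1 p1
         \<and> min_parabolic (SOe::(real^('n + 1)^('n + 1)) set) so_n1 H_so 1 p2
         \<and> min_parabolic (SOe::(real^('n + 1)^('n + 1)) set) so_n1 H_so 1 p3 \<longrightarrow>
        (sum_with_diagonal_is_all so_n1 p1 p2 p3 \<longleftrightarrow> p1 \<noteq> p2 \<and> p1 \<noteq> p3 \<and> p2 \<noteq> p3))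
     \<and> (\<exists>p1 p2 p3. min_parabolic (SOe::(real^('n + 1)^('n + 1)) set) so_n1 H_so 1 p1
         \<and> min_parabolic (SOe::(real^('n + 1)^('n + 1)) set) so_n1 H_so 1 p2
         \<and> min_parabolic (SOe::(real^('n + 1)^('n + 1)) set) so_n1 H_so 1 p3
         \<and> sum_with_diagonal_is_all so_n1 p1 p2 p3))"
proof (intro conjI allI impI)
  fix p1 p2 p3 :: "(real^('n + 1)^('n + 1)) set"
  assume "min_parabolic (SOe::(real^('n + 1)^('n + 1)) set) so_n1 H_so 1 p1
         \<and> min_parabolic (SOe::(real^('n + 1)^('n + 1)) set) so_n1 H_so 1 p2
         \<and> min_parabolic (SOe::(real^('n + 1)^('n + 1)) set) so_n1 H_so 1 p3"
  then obtain g1 g2 g3 :: "real^('n + 1)^('n + 1)" where g: "g1 \<in> SOe" "g2 \<in> SOe" "g3 \<in> SOe"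
    and p: "p1 = stabs (g1 *v npl)" "p2 = stabs (g2 *v npl)" "p3 = stabs (g3 *v npl)"
    unfolding min_par_so by blast
  show "sum_with_diagonal_is_all so_n1 p1 p2 p3 \<longleftrightarrow> p1 \<noteq> p2 \<and> p1 \<noteq> p3 \<and> p2 \<noteq> p3"
  proof
    assume S: "sum_with_diagonal_is_all so_n1 p1 p2 p3"
    show "p1 \<noteq> p2 \<and> p1 \<noteq> p3 \<and> p2 \<noteq> p3"
    proof (rule ccontr)
      assume "\<not> (p1 \<noteq> p2 \<and> p1 \<noteq> p3 \<and> p2 \<noteq> p3)"
      then obtain p where peq: "(p1 = p \<and> p2 = p) \<or> (p1 = p \<and> p3 = p) \<or> (p2 = p \<and> p3 = p)" by blast
      then obtain g where gg: "g \<in> SOe" "p = stabs (g *v npl)" using g p by blast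
      obtain E where E: "E \<in> so_n1" "E \<notin> stabs (g *v npl)" using so_proper[OF card gg(1)] by blast
      have "\<not> sum_with_diagonal_is_all so_n1 p1 p2 p3"
      proof (rule not_all_if_eq[of p E so_n1 0])
        show "x - y \<in> p" if "x \<in> p" "y \<in> p" for x y using that gg stabs_diff by blast
      qed (use E gg peq so_zero in auto)
      with S show False by simp
    qed
  next
    assume d: "p1 \<noteq> p2 \<and> p1 \<noteq> p3 \<and> p2 \<noteq> p3"
    have "Bf (g1 *v npl) (g2 *v npl) \<noteq> 0" "Bf (g1 *v npl) (g3 *v npl) \<noteq> 0" "Bf (g2 *v npl) (g3 *v npl) \<noteq> 0"
      using pair_ne g d p by metis+
    from so_sum[OF g this] show "sum_with_diagonal_is_all so_n1 p1 p2 p3" using p by simp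
  qed
next
  obtain g1 g2 g3 :: "real^('n + 1)^('n + 1)" where g: "g1 \<in> SOe" "g2 \<in> SOe" "g3 \<in> SOe"
    and C: "Bf (g1 *v npl) (g2 *v npl) \<noteq> 0" "Bf (g1 *v npl) (g3 *v npl) \<noteq> 0" "Bf (g2 *v npl) (g3 *v npl) \<noteq> 0"
    using so_exists[OF card] by blast
  show "\<exists>p1 p2 p3. min_parabolic (SOe::(real^('n + 1)^('n + 1)) set) so_n1 H_so 1 p1
         \<and> min_parabolic (SOe::(real^('n + 1)^('n + 1)) set) so_n1 H_so 1 p2
         \<and> min_parabolic (SOe::(real^('n + 1)^('n + 1)) set) so_n1 H_so 1 p3
         \<and> sum_with_diagonal_is_all so_n1 p1 p2 p3"
    unfolding min_par_so using so_sum[OF g C] g by blast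
qed


theorem proposition6p1:
  assumes "CARD('n::finite) \<ge> 2"
  shows
   \<comment> \<open>G0 = SL(2,R)\<close>
   "((\<forall>p1 p2 p3. min_parabolic SL2R sl2R H_sl2R 2 p1 \<and> min_parabolic SL2R sl2R H_sl2R 2 p2
         \<and> min_parabolic SL2R sl2R H_sl2R 2 p3 \<longrightarrow>
        (sum_with_diagonal_is_all sl2R p1 p2 p3 \<longleftrightarrow> p1 \<noteq> p2 \<and> p1 \<noteq> p3 \<and> p2 \<noteq> p3))
     \<and> (\<exists>p1 p2 p3. min_parabolic SL2R sl2R H_sl2R 2 p1 \<and> min_parabolic SL2R sl2R H_sl2R 2 p2
         \<and> min_parabolic SL2R sl2R H_sl2R 2 p3 \<and> sum_with_diagonal_is_all sl2R p1 p2 p3))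
  \<and> \<comment> \<open>G0 = SL(2,C)\<close>
    ((\<forall>p1 p2 p3. min_parabolic SL2C sl2C H_sl2C 2 p1 \<and> min_parabolic SL2C sl2C H_sl2C 2 p2
         \<and> min_parabolic SL2C sl2C H_sl2C 2 p3 \<longrightarrow>
        (sum_with_diagonal_is_all sl2C p1 p2 p3 \<longleftrightarrow> p1 \<noteq> p2 \<and> p1 \<noteq> p3 \<and> p2 \<noteq> p3))
     \<and> (\<exists>p1 p2 p3. min_parabolic SL2C sl2C H_sl2C 2 p1 \<and> min_parabolic SL2C sl2C H_sl2C 2 p2
         \<and> min_parabolic SL2C sl2C H_sl2C 2 p3 \<and> sum_with_diagonal_is_all sl2C p1 p2 p3))
  \<and> \<comment> \<open>G0 = SO_e(n,1), n = CARD('n) \<ge> 2\<close>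
    ((\<forall>p1 p2 p3. min_parabolic (SOe::(real^('n + 1)^('n + 1)) set) so_n1 H_so 1 p1
         \<and> min_parabolic (SOe::(real^('n + 1)^('n + 1)) set) so_n1 H_so 1 p2
         \<and> min_parabolic (SOe::(real^('n + 1)^('n + 1)) set) so_n1 H_so 1 p3 \<longrightarrow>
        (sum_with_diagonal_is_all so_n1 p1 p2 p3 \<longleftrightarrow> p1 \<noteq> p2 \<and> p1 \<noteq> p3 \<and> p2 \<noteq> p3))
     \<and> (\<exists>p1 p2 p3. min_parabolic (SOe::(real^('n + 1)^('n + 1)) set) so_n1 H_so 1 p1
         \<and> min_parabolic (SOe::(real^('n + 1)^('n + 1)) set) so_n1 H_so 1 p2
         \<and> min_parabolic (SOe::(real^('n + 1)^('n + 1)) set) so_n1 H_so 1 p3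
         \<and> sum_with_diagonal_is_all so_n1 p1 p2 p3))"
proof -
  have R: "SL2R = {g::real^2^2. det g = 1}" "sl2R = {X::real^2^2. trace X = 0}" "H_sl2R = (Hd::real^2^2)"
    by (simp_all add: SL2R_def sl2R_def H_sl2R_def Hd_def)
  have C: "SL2C = {g::complex^2^2. det g = 1}" "sl2C = {X::complex^2^2. trace X = 0}" "H_sl2C = (Hd::complex^2^2)"
    by (simp_all add: SL2C_def sl2C_def H_sl2C_def Hd_def)
  show ?thesis
    unfolding R C using sl2_main[where 'k=real] sl2_main[where 'k=complex] so_main[OF assms]
    by blast
qed

end
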